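(* Let $(G_a,G_b)\sim ER(n;\mathbf p)$ be correlated graphs on vertex set $V$, let $h\le n-2$, and let $U=\{u_1,u_2\}\subseteq V$. Let $\mathbf w_a^U=f_h(G_a[V\setminus U])$, $\mathbf w_b^U=f_h(G_b[V\setminus U])$, $B_a^U=G_a[U,\mathbf w_a^U]$, $B_b^U=G_b[U,\mathbf w_b^U]$, and let $\mathcal E^H(U)$ be the event $\mathbf w_a^U=\mathbf w_b^U$. Then \[ B_a^U\sim ER(2,h,p_{1*}),\qquad B_b^U\sim ER(2,h,p_{*1}), \] and, conditionally on $\mathcal E^H(U)$, $(B_a^U,B_b^U)\sim ER(2,h,\mathbf p)$.
   Context: Correlated Erdős–Rényi model $ER(n;\mathbf{p})$: $G_a,G_b$ are random graphs on the same $n$-vertex set $V$; for each unordered pair $e$ of distinct vertices, independently, $(\mathbf 1[e\in E(G_a)],\mathbf 1[e\in E(G_b)])$ equals $(1,1),(1,0),(0,1),(0,0)$ with probabilities $p_{11},p_{10},p_{01},p_{00}$; $p_{1*}=p_{11}+p_{10}$, $p_{*1}=p_{11}+p_{01}$. $G[W]$ is the induced subgraph on $W$. $f_h(G)$ is the vector $(w_1,\dots,w_h)$ of $h$ distinct vertices of $G$ such that $\deg_G(w_i)$ equals the $i$-th largest degree of $G$ (ties broken by a fixed rule, so $f_h(G)$ is a function of $G$). For $U\subseteq V$ and a vector $\mathbf w=(w_1,\dots,w_h)$ of distinct vertices of $V\setminus U$, $G[U,\mathbf w]$ is the bipartite graph with left vertex set $U$, right vertex set $[h]$, and edge set $\{(u,j)\in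 U\times[h]:\{u,w_j\}\in E(G)\}$. $ER(2,h,q)$ denotes the random bipartite graph with left set $U$, right set $[h]$, each of the $2h$ possible edges present independently with probability $q$; $ER(2,h,\mathbf p)$ denotes the correlated pair of such bipartite graphs in which for each left–right pair independently the edge indicator pair takes values $(1,1),(1,0),(0,1),(0,0)$ with probabilities $p_{11},p_{10},p_{01},p_{00}$. *)

theory Defs
  imports "HOL-Probability.Probability"
begin

text \<open>A graph on vertex set a subset of nat is given by its edge indicator on
  unordered pairs (2-element sets) of vertices.\<close>

definition edge_pmf :: "real \<Rightarrow> real \<Rightarrow> real \<Rightarrow> real \<Rightarrow> (bool \<times> bool) pmf" where
  "edge_pmf p11 p10 p01 p00 =
     pmf_of_list [((True,True),p11), ((True,False),p10), ((False,True),p01), ((False,False),p00)]"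

definition vpairs :: "nat \<Rightarrow> nat set set" where
  "vpairs n = {{i,j} | i j. i < j \<and> j < n}"

text \<open>Correlated Erdos-Renyi model ER(n;p): an outcome x assigns to each vertex pair e
  the indicator pair (1[e in E(G_a)], 1[e in E(G_b)]).\<close>
definition er_corr :: "nat \<Rightarrow> real \<Rightarrow> real \<Rightarrow> real \<Rightarrow> real \<Rightarrow> (nat set \<Rightarrow> bool \<times> bool) pmf" where
  "er_corr n p11 p10 p01 p00 = Pi_pmf (vpairs n) (False, False) (\<lambda>_. edge_pmf p11 p10 p01 p00)"

definition Ga_of :: "(nat set \<Rightarrow> bool \<times> bool) \<Rightarrow> (nat set \<Rightarrow> bool)" where
  "Ga_of x = (\<lambda>e. fst (x e))"

definition Gb_of :: "(nat set \<Rightarrow> bool \<times> bool) \<Rightarrow> (nat set \<Rightarrow> bool)" where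
  "Gb_of x = (\<lambda>e. snd (x e))"

definition deg :: "(nat set \<Rightarrow> bool) \<Rightarrow> nat set \<Rightarrow> nat \<Rightarrow> nat" where
  "deg G W v = card {u \<in> W. u \<noteq> v \<and> G {v, u}}"

definition kth_largest_deg :: "(nat set \<Rightarrow> bool) \<Rightarrow> nat set \<Rightarrow> nat \<Rightarrow> nat" where
  "kth_largest_deg G W i = rev (sort (map (deg G W) (sorted_list_of_set W))) ! i"

text \<open>F is an admissible top-h selection rule: F W G = f_h(G[W]) is a function of the
  induced graph G[W] only, and it lists h distinct vertices of W whose degrees in G[W]
  are the 1st, ..., h-th largest degrees (ties broken in some fixed way).\<close>
definition top_selector :: "nat \<Rightarrow> (nat set \<Rightarrow> (nat set \<Rightarrow> bool) \<Rightarrow> nat list) \<Rightarrow> bool" where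
  "top_selector h F \<longleftrightarrow>
     (\<forall>W G G'. (\<forall>e. e \<subseteq> W \<longrightarrow> G e = G' e) \<longrightarrow> F W G = F W G') \<and>
     (\<forall>W G. finite W \<and> h \<le> card W \<longrightarrow>
        length (F W G) = h \<and> distinct (F W G) \<and> set (F W G) \<subseteq> W \<and>
        (\<forall>i<h. deg G W (F W G ! i) = kth_largest_deg G W i))"

text \<open>Bipartite graph G[U,w]: left set U, right set {0..<length w}.\<close>
definition bip :: "(nat set \<Rightarrow> bool) \<Rightarrow> nat set \<Rightarrow> nat list \<Rightarrow> (nat \<times> nat) set" where
  "bip G U w = {(u, j). u \<in> U \<and> j < length w \<and> G {u, w ! j}}"

definition er_bip :: "nat set \<Rightarrow> nat \<Rightarrow> real \<Rightarrow> (nat \<times> nat) set pmf" where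
  "er_bip U h q = map_pmf (\<lambda>f. {x \<in> U \<times> {..<h}. f x})
      (Pi_pmf (U \<times> {..<h}) False (\<lambda>_. bernoulli_pmf q))"

definition er_bip2 :: "nat set \<Rightarrow> nat \<Rightarrow> real \<Rightarrow> real \<Rightarrow> real \<Rightarrow> real \<Rightarrow>
    ((nat \<times> nat) set \<times> (nat \<times> nat) set) pmf" where
  "er_bip2 U h p11 p10 p01 p00 = map_pmf
      (\<lambda>f. ({x \<in> U \<times> {..<h}. fst (f x)}, {x \<in> U \<times> {..<h}. snd (f x)}))
      (Pi_pmf (U \<times> {..<h}) (False, False) (\<lambda>_. edge_pmf p11 p10 p01 p00))"

end

theory Submission
  imports Defs
begin


lemma vpairs_finite: "finite (vpairs n)"
proof -
  have "vpairs n \<subseteq> Pow {..<n}" unfolding vpairs_def by auto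
  then show ?thesis by (rule finite_subset) auto
qed

lemma vpairs_mem: "a \<noteq> b \<Longrightarrow> a < n \<Longrightarrow> b < n \<Longrightarrow> {a,b} \<in> vpairs n"
  unfolding vpairs_def
  by (cases "a < b") (auto, metis insert_commute linorder_neqE_nat)

lemma empty_not_vpairs: "{} \<notin> vpairs n"
  unfolding vpairs_def by auto

lemma core:
  fixes w :: "nat list" and U :: "nat set" and B :: "nat set set" and K :: "(bool \<times> bool) pmf"
  assumes fB: "finite B" and fU: "finite U" and dw: "distinct w" and lw: "length w = h"
    and disj: "set w \<inter> U = {}" and inB: "\<And>u j. u \<in> U \<Longrightarrow> j < h \<Longrightarrow> {u, w!j} \<in> B"
    and eB: "{} \<notin> B"
  shows "map_pmf (\<lambda>g. (bip (Ga_of g) U w, bip (Gb_of g) U w)) (Pi_pmf B (False,False) (\<lambda>_. K))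
       = map_pmf (\<lambda>f. ({x\<in>U\<times>{..<h}. fst (f x)}, {x\<in>U\<times>{..<h}. snd (f x)}))
           (Pi_pmf (U\<times>{..<h}) (False,False) (\<lambda>_. K))"
proof -
  define S where "S = U \<times> {..<h}"
  define \<tau> where "\<tau> = (\<lambda>x::nat\<times>nat. if x \<in> S then {fst x, w ! snd x} else {})"
  have fS: "finite S" using fU unfolding S_def by auto
  have inj: "inj_on \<tau> S"
  proof (rule inj_onI)
    fix x y assume xs: "x \<in> S" and ys: "y \<in> S" and eq: "\<tau> x = \<tau> y"
    obtain u j where x: "x = (u,j)" "u \<in> U" "j < h" using xs S_def by auto
    obtain u' j' where y: "y = (u',j')" "u' \<in> U" "j' < h" using ys S_def by auto
    have e: "{u, w!j} = {u', w!j'}" using eq xs ys x y \<tau>_def by auto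
    have wj: "w!j \<in> set w" "w!j' \<in> set w" using x y lw by auto
    have "w!j \<notin> U" "w!j' \<notin> U" using wj disj by auto
    then have "u = u' \<and> w!j = w!j'" using e x y by (metis doubleton_eq_iff)
    then show "x = y" using x y dw lw nth_eq_iff_index_eq by auto
  qed
  have bij: "bij_betw \<tau> S (\<tau> ` S)" using inj by (simp add: bij_betw_imageI)
  have sub: "\<tau> ` S \<subseteq> B" using inB unfolding \<tau>_def S_def by auto
  have out: "\<And>x. x \<notin> S \<Longrightarrow> \<tau> x \<notin> \<tau> ` S"
  proof -
    fix x assume "x \<notin> S"
    then have "\<tau> x = {}" by (simp add: \<tau>_def)
    then show "\<tau> x \<notin> \<tau> ` S" using sub eB by auto
  qed
  have "Pi_pmf S (False,False) (\<lambda>_. K) = map_pmf (\<lambda>g. g \<circ> \<tau>) (Pi_pmf (\<tau> ` S) (False,False) (\<lambda>_. K))"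
    by (rule Pi_pmf_bij_betw[OF fS bij out])
  also have "Pi_pmf (\<tau> ` S) (False,False) (\<lambda>_. K) =
      map_pmf (\<lambda>f x. if x \<in> \<tau> ` S then f x else (False,False)) (Pi_pmf B (False,False) (\<lambda>_. K))"
    by (rule Pi_pmf_subset[OF fB sub])
  finally have P: "Pi_pmf S (False,False) (\<lambda>_. K) = map_pmf (\<lambda>g. (\<lambda>f x. if x \<in> \<tau> ` S then f x else (False,False)) g \<circ> \<tau>) (Pi_pmf B (False,False) (\<lambda>_. K))"
    by (simp add: map_pmf_comp o_def)
  show ?thesis
    unfolding S_def[symmetric] P map_pmf_comp
  proof (rule map_pmf_cong[OF refl])
    fix g :: "nat set \<Rightarrow> bool \<times> bool"
    have "\<And>x. x \<in> S \<Longrightarrow> \<tau> x \<in> \<tau> ` S" by auto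
    then show "(bip (Ga_of g) U w, bip (Gb_of g) U w) =
      ({x \<in> S. fst (((\<lambda>x. if x \<in> \<tau> ` S then g x else (False, False)) \<circ> \<tau>) x)},
       {x \<in> S. snd (((\<lambda>x. if x \<in> \<tau> ` S then g x else (False, False)) \<circ> \<tau>) x)})"
      unfolding bip_def Ga_of_def Gb_of_def S_def \<tau>_def using lw by auto
  qed
qed



lemma edge_fst:
  assumes "p11 \<ge> 0" "p10 \<ge> 0" "p01 \<ge> 0" "p00 \<ge> 0" "p11 + p10 + p01 + p00 = 1"
  shows "map_pmf fst (edge_pmf p11 p10 p01 p00) = bernoulli_pmf (p11 + p10)"
    and "map_pmf snd (edge_pmf p11 p10 p01 p00) = bernoulli_pmf (p11 + p01)"
proof -
  have wf: "pmf_of_list_wf [((True,True),p11), ((True,False),p10), ((False,True),p01), ((False,False),p00)]"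
    using assms by (auto simp: pmf_of_list_wf_def)
  show "map_pmf fst (edge_pmf p11 p10 p01 p00) = bernoulli_pmf (p11 + p10)"
  proof (rule pmf_eqI)
    fix b :: bool
    show "pmf (map_pmf fst (edge_pmf p11 p10 p01 p00)) b = pmf (bernoulli_pmf (p11 + p10)) b"
      unfolding pmf_map edge_pmf_def measure_pmf_of_list[OF wf]
      using assms by (cases b) auto
  qed
  show "map_pmf snd (edge_pmf p11 p10 p01 p00) = bernoulli_pmf (p11 + p01)"
  proof (rule pmf_eqI)
    fix b :: bool
    show "pmf (map_pmf snd (edge_pmf p11 p10 p01 p00)) b = pmf (bernoulli_pmf (p11 + p01)) b"
      unfolding pmf_map edge_pmf_def measure_pmf_of_list[OF wf]
      using assms by (cases b) auto
  qed
qed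

lemma er_bip_marg:
  assumes "p11 \<ge> 0" "p10 \<ge> 0" "p01 \<ge> 0" "p00 \<ge> 0" "p11 + p10 + p01 + p00 = 1"
    and fU: "finite U"
  shows "map_pmf fst (er_bip2 U h p11 p10 p01 p00) = er_bip U h (p11 + p10)"
    and "map_pmf snd (er_bip2 U h p11 p10 p01 p00) = er_bip U h (p11 + p01)"
proof -
  have fS: "finite (U \<times> {..<h})" using fU by auto
  have "er_bip U h (p11 + p10) = map_pmf (\<lambda>f. {x \<in> U \<times> {..<h}. f x})
      (Pi_pmf (U \<times> {..<h}) False (\<lambda>_. map_pmf fst (edge_pmf p11 p10 p01 p00)))"
    unfolding er_bip_def edge_fst(1)[OF assms(1-5)] ..
  also have "\<dots> = map_pmf fst (er_bip2 U h p11 p10 p01 p00)"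
    unfolding er_bip2_def Pi_pmf_map[OF fS, of fst "(False,False)" False, simplified] map_pmf_comp
    by (simp add: o_def)
  finally show "map_pmf fst (er_bip2 U h p11 p10 p01 p00) = er_bip U h (p11 + p10)" ..
  have "er_bip U h (p11 + p01) = map_pmf (\<lambda>f. {x \<in> U \<times> {..<h}. f x})
      (Pi_pmf (U \<times> {..<h}) False (\<lambda>_. map_pmf snd (edge_pmf p11 p10 p01 p00)))"
    unfolding er_bip_def edge_fst(2)[OF assms(1-5)] ..
  also have "\<dots> = map_pmf snd (er_bip2 U h p11 p10 p01 p00)"
    unfolding er_bip2_def Pi_pmf_map[OF fS, of snd "(False,False)" False, simplified] map_pmf_comp
    by (simp add: o_def)
  finally show "map_pmf snd (er_bip2 U h p11 p10 p01 p00) = er_bip U h (p11 + p01)" ..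
qed



lemma bip_mrg:
  assumes "set w \<subseteq> W" "U \<inter> W = {}" "\<And>e. e \<in> A \<Longrightarrow> e \<subseteq> W"
  shows "bip (Ga_of (\<lambda>x. if x \<in> A then f x else g x)) U w = bip (Ga_of g) U w"
    and "bip (Gb_of (\<lambda>x. if x \<in> A then f x else g x)) U w = bip (Gb_of g) U w"
proof -
  have "\<And>u j. u \<in> U \<Longrightarrow> j < length w \<Longrightarrow> {u, w!j} \<notin> A"
    using assms by auto
  then show "bip (Ga_of (\<lambda>x. if x \<in> A then f x else g x)) U w = bip (Ga_of g) U w"
    and "bip (Gb_of (\<lambda>x. if x \<in> A then f x else g x)) U w = bip (Gb_of g) U w"
    unfolding bip_def Ga_of_def Gb_of_def by auto
qed

theorem lemma4p12:
  fixes n h u1 u2 :: nat and p11 p10 p01 p00 :: real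
    and F :: "nat set \<Rightarrow> (nat set \<Rightarrow> bool) \<Rightarrow> nat list"
  assumes "p11 \<ge> 0" "p10 \<ge> 0" "p01 \<ge> 0" "p00 \<ge> 0" "p11 + p10 + p01 + p00 = 1"
    and "u1 < n" "u2 < n" "u1 \<noteq> u2" "h \<le> n - 2"
    and "top_selector h F"
  defines "M \<equiv> er_corr n p11 p10 p01 p00"
    and "Ba \<equiv> (\<lambda>x. bip (Ga_of x) {u1, u2} (F ({..<n} - {u1, u2}) (Ga_of x)))"
    and "Bb \<equiv> (\<lambda>x. bip (Gb_of x) {u1, u2} (F ({..<n} - {u1, u2}) (Gb_of x)))"
    and "EH \<equiv> {x. F ({..<n} - {u1, u2}) (Ga_of x) = F ({..<n} - {u1, u2}) (Gb_of x)}"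
  shows "map_pmf Ba M = er_bip {u1, u2} h (p11 + p10) \<and>
         map_pmf Bb M = er_bip {u1, u2} h (p11 + p01) \<and>
         (measure_pmf.prob M EH > 0 \<longrightarrow>
           map_pmf (\<lambda>x. (Ba x, Bb x)) (cond_pmf M EH) = er_bip2 {u1, u2} h p11 p10 p01 p00)"
proof -
  note ps = assms(1-5)
  define W where "W = {..<n} - {u1, u2}"
  define U where "U = {u1, u2}"
  define K where "K = edge_pmf p11 p10 p01 p00"
  define d where "d = (False, False)"
  define A where "A = {e \<in> vpairs n. e \<subseteq> W}"
  define B where "B = vpairs n - A"
  define PA where "PA = Pi_pmf A d (\<lambda>_. K)"
  define PB where "PB = Pi_pmf B d (\<lambda>_. K)"
  define mrg where "mrg = (\<lambda>f g x. if x \<in> A then f x else (g x :: bool \<times> bool))"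
  define wa where "wa = (\<lambda>f. F W (Ga_of f))"
  define wb where "wb = (\<lambda>f. F W (Gb_of f))"
  define R where "R = er_bip2 U h p11 p10 p01 p00"
  have fA: "finite A" and fB: "finite B" using vpairs_finite unfolding A_def B_def by auto
  have AB: "vpairs n = A \<union> B" "A \<inter> B = {}" unfolding A_def B_def by auto
  have M1: "M = map_pmf (\<lambda>(f,g) x. if x \<in> A then f x else g x) (pair_pmf PA PB)"
    unfolding M_def er_corr_def AB(1) PA_def PB_def K_def d_def
    by (rule Pi_pmf_union[OF fA fB AB(2)])
  have Mb: "M = bind_pmf PA (\<lambda>f. map_pmf (mrg f) PB)"
    unfolding M1 pair_pmf_def map_bind_pmf mrg_def
    by (simp add: map_pmf_def bind_assoc_pmf bind_return_pmf)
  have sel: "top_selector h F" by fact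
  have cardW: "card W = n - 2" unfolding W_def using assms(6-8) by (simp add: card_Diff_subset)
  have fW: "finite W" unfolding W_def by auto
  have selP: "length (F W G) = h \<and> distinct (F W G) \<and> set (F W G) \<subseteq> W" for G
    using sel fW cardW assms(9) unfolding top_selector_def by auto
  have selC: "F W G = F W G'" if "\<And>e. e \<subseteq> W \<Longrightarrow> G e = G' e" for G G'
    using sel that unfolding top_selector_def by blast
  have UW: "U \<inter> W = {}" unfolding U_def W_def by auto
  have AW: "\<And>e. e \<in> A \<Longrightarrow> e \<subseteq> W" unfolding A_def by auto
  have fU: "finite U" unfolding U_def by auto
  have core: "map_pmf (\<lambda>g. (bip (Ga_of g) U w, bip (Gb_of g) U w)) PB = R"
    if "length w = h" "distinct w" "set w \<subseteq> W" for w
  proof -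
    have inB: "{u, w!j} \<in> B" if "u \<in> U" "j < h" for u j
    proof -
      have wj: "w!j \<in> W" using that \<open>length w = h\<close> \<open>set w \<subseteq> W\<close> by auto
      then have "u \<noteq> w!j" "w!j < n" using UW that W_def by auto
      moreover have "u < n" using that assms(6,7) U_def by auto
      ultimately have "{u, w!j} \<in> vpairs n" using vpairs_mem by blast
      moreover have "\<not> {u, w!j} \<subseteq> W" using UW that by auto
      ultimately show ?thesis unfolding B_def A_def by auto
    qed
    have "{} \<notin> B" unfolding B_def using empty_not_vpairs by auto
    moreover have "set w \<inter> U = {}" using UW that by auto
    ultimately show ?thesis
      unfolding PB_def R_def er_bip2_def d_def K_def
      using core[OF fB fU that(2,1) _ inB] by auto
  qed
  have suppA: "f x = d" if "f \<in> set_pmf PA" "x \<notin> A" for f x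
    using set_Pi_pmf_subset[OF fA, of d "\<lambda>_. K"] that unfolding PA_def by auto
  have suppB: "g x = d" if "g \<in> set_pmf PB" "x \<notin> B" for g x
    using set_Pi_pmf_subset[OF fB, of d "\<lambda>_. K"] that unfolding PB_def by auto
  have agree: "mrg f g e = f e" if "f \<in> set_pmf PA" "g \<in> set_pmf PB" "e \<subseteq> W" for f g e
  proof (cases "e \<in> A")
    case False
    then have "e \<notin> B" using that(3) unfolding A_def B_def by auto
    then show ?thesis using False suppA[OF that(1)] suppB[OF that(2)] unfolding mrg_def by auto
  qed (auto simp: mrg_def)
  have waM: "wa (mrg f g) = wa f" "wb (mrg f g) = wb f"
    if "f \<in> set_pmf PA" "g \<in> set_pmf PB" for f g
    unfolding wa_def wb_def Ga_of_def Gb_of_def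
    by (rule selC, use agree[OF that] in auto)+
  have BaM: "Ba (mrg f g) = bip (Ga_of g) U (wa f)"
    if "f \<in> set_pmf PA" "g \<in> set_pmf PB" for f g
  proof -
    have "Ba (mrg f g) = bip (Ga_of (mrg f g)) U (wa (mrg f g))"
      unfolding Ba_def wa_def W_def U_def ..
    also have "\<dots> = bip (Ga_of (mrg f g)) U (wa f)" using waM[OF that] by simp
    also have "\<dots> = bip (Ga_of g) U (wa f)"
      unfolding mrg_def by (rule bip_mrg(1)[OF _ UW AW]) (use selP wa_def in auto)
    finally show ?thesis .
  qed
  have BbM: "Bb (mrg f g) = bip (Gb_of g) U (wb f)"
    if "f \<in> set_pmf PA" "g \<in> set_pmf PB" for f g
  proof -
    have "Bb (mrg f g) = bip (Gb_of (mrg f g)) U (wb (mrg f g))"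
      unfolding Bb_def wb_def W_def U_def ..
    also have "\<dots> = bip (Gb_of (mrg f g)) U (wb f)" using waM[OF that] by simp
    also have "\<dots> = bip (Gb_of g) U (wb f)"
      unfolding mrg_def by (rule bip_mrg(2)[OF _ UW AW]) (use selP wb_def in auto)
    finally show ?thesis .
  qed
  have c1: "map_pmf Ba M = er_bip U h (p11 + p10)"
  proof -
    have "map_pmf Ba M = bind_pmf PA (\<lambda>f. map_pmf (\<lambda>g. Ba (mrg f g)) PB)"
      unfolding Mb map_bind_pmf map_pmf_comp ..
    also have "\<dots> = bind_pmf PA (\<lambda>f. map_pmf fst (map_pmf (\<lambda>g. (bip (Ga_of g) U (wa f), bip (Gb_of g) U (wa f))) PB))"
      unfolding map_pmf_comp using BaM by (intro bind_pmf_cong refl map_pmf_cong) auto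
    also have "\<dots> = bind_pmf PA (\<lambda>f. map_pmf fst R)"
      using core selP unfolding wa_def by simp
    also have "\<dots> = er_bip U h (p11 + p10)"
      unfolding R_def using er_bip_marg(1)[OF ps fU] by simp
    finally show ?thesis .
  qed
  have c2: "map_pmf Bb M = er_bip U h (p11 + p01)"
  proof -
    have "map_pmf Bb M = bind_pmf PA (\<lambda>f. map_pmf (\<lambda>g. Bb (mrg f g)) PB)"
      unfolding Mb map_bind_pmf map_pmf_comp ..
    also have "\<dots> = bind_pmf PA (\<lambda>f. map_pmf snd (map_pmf (\<lambda>g. (bip (Ga_of g) U (wb f), bip (Gb_of g) U (wb f))) PB))"
      unfolding map_pmf_comp using BbM by (intro bind_pmf_cong refl map_pmf_cong) auto
    also have "\<dots> = bind_pmf PA (\<lambda>f. map_pmf snd R)"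
      using core selP unfolding wb_def by simp
    also have "\<dots> = er_bip U h (p11 + p01)"
      unfolding R_def using er_bip_marg(2)[OF ps fU] by simp
    finally show ?thesis .
  qed
  define Z where "Z = (\<lambda>x. (Ba x, Bb x))"
  define \<Phi> where "\<Phi> = (\<lambda>x. (x \<in> EH, Z x))"
  define E' where "E' = {f. wa f = wb f}"
  define N where "N = (\<lambda>f. if f \<in> E' then map_pmf (Pair True) R
                        else map_pmf (\<lambda>g. (False, Z (mrg f g))) PB)"
  have EHw: "(x \<in> EH) = (wa x = wb x)" for x
    unfolding EH_def wa_def wb_def W_def by simp
  have PhiM: "map_pmf \<Phi> M = bind_pmf PA N"
    unfolding Mb map_bind_pmf map_pmf_comp
  proof (intro bind_pmf_cong refl)
    fix f assume f: "f \<in> set_pmf PA"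
    show "map_pmf (\<lambda>x. \<Phi> (mrg f x)) PB = N f"
    proof (cases "f \<in> E'")
      case True
      have "map_pmf (\<lambda>x. \<Phi> (mrg f x)) PB =
          map_pmf (Pair True) (map_pmf (\<lambda>g. (bip (Ga_of g) U (wa f), bip (Gb_of g) U (wa f))) PB)"
        unfolding map_pmf_comp
        using True BaM[OF f] BbM[OF f] waM[OF f] unfolding \<Phi>_def Z_def EHw E'_def
        by (intro map_pmf_cong refl) auto
      also have "\<dots> = map_pmf (Pair True) R" using core selP unfolding wa_def by simp
      finally show ?thesis using True unfolding N_def by simp
    next
      case False
      have "map_pmf (\<lambda>x. \<Phi> (mrg f x)) PB = map_pmf (\<lambda>g. (False, Z (mrg f g))) PB"
        unfolding \<Phi>_def using False waM[OF f] unfolding EHw E'_def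
        by (intro map_pmf_cong refl) auto
      then show ?thesis using False unfolding N_def by simp
    qed
  qed
  have pN: "pmf (N f) (True, y) = indicator E' f * pmf R y" for f y
  proof (cases "f \<in> E'")
    case True
    then show ?thesis unfolding N_def
      by (simp add: pmf_map_inj'[of "Pair True"] inj_on_def)
  next
    case False
    have "(\<lambda>g. (False, Z (mrg f g))) -` {(True, y)} = {}" by auto
    then show ?thesis using False unfolding N_def by (simp add: pmf_map)
  qed
  have joint: "measure_pmf.prob M (EH \<inter> Z -` {y}) = measure_pmf.prob PA E' * pmf R y" for y
  proof -
    have "measure_pmf.prob M (EH \<inter> Z -` {y}) = pmf (map_pmf \<Phi> M) (True, y)"
      unfolding pmf_map \<Phi>_def by (intro arg_cong[where f="measure_pmf.prob M"]) auto
    also have "\<dots> = (\<integral>f. indicator E' f * pmf R y \<partial>measure_pmf PA)"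
      unfolding PhiM pmf_bind pN ..
    also have "\<dots> = measure_pmf.prob PA E' * pmf R y"
      by simp
    finally show ?thesis .
  qed
  have probEH: "measure_pmf.prob M EH = measure_pmf.prob PA E'"
  proof -
    have "map_pmf (\<lambda>x. x \<in> EH) M = map_pmf fst (map_pmf \<Phi> M)"
      unfolding map_pmf_comp \<Phi>_def by simp
    also have "\<dots> = bind_pmf PA (\<lambda>f. return_pmf (f \<in> E'))"
      unfolding PhiM map_bind_pmf
      by (intro bind_pmf_cong refl) (auto simp: N_def map_pmf_comp)
    also have "\<dots> = map_pmf (\<lambda>f. f \<in> E') PA" by (simp add: map_pmf_def)
    finally have eq: "map_pmf (\<lambda>x. x \<in> EH) M = map_pmf (\<lambda>f. f \<in> E') PA" .
    have "measure_pmf.prob M EH = pmf (map_pmf (\<lambda>x. x \<in> EH) M) True"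
      unfolding pmf_map by (intro arg_cong[where f="measure_pmf.prob M"]) auto
    also have "\<dots> = pmf (map_pmf (\<lambda>f. f \<in> E') PA) True" unfolding eq ..
    also have "\<dots> = measure_pmf.prob PA E'"
      unfolding pmf_map by (intro arg_cong[where f="measure_pmf.prob PA"]) auto
    finally show ?thesis .
  qed
  have c3: "map_pmf Z (cond_pmf M EH) = R" if pos: "measure_pmf.prob M EH > 0"
  proof (rule pmf_eqI)
    fix y
    have ne: "set_pmf M \<inter> EH \<noteq> {}" using pos measure_pmf_zero_iff[of M EH] by auto
    have "pmf (map_pmf Z (cond_pmf M EH)) y = measure (uniform_measure (measure_pmf M) EH) (Z -` {y})"
      unfolding pmf_map cond_pmf.rep_eq[OF ne] ..
    also have "\<dots> = measure_pmf.prob M (EH \<inter> Z -` {y}) / measure_pmf.prob M EH"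
      using ne by (subst measure_uniform_measure)
        (auto simp: measure_pmf.emeasure_eq_measure measure_pmf_zero_iff)
    also have "\<dots> = pmf R y" unfolding joint probEH using pos probEH by simp
    finally show "pmf (map_pmf Z (cond_pmf M EH)) y = pmf R y" .
  qed
  show ?thesis using c1 c2 c3 unfolding U_def R_def Z_def by auto
qed

end
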